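(* Let $0\le t_1<t_2$, let $m,k>0$ be constants, let $f\in C[t_1,t_2]$, and let $f^1,f^2\in\mathbb{R}$ be given constants. For $u\in C^2[t_1,t_2]$ define $$I^\tau[u]=\frac{m}{2}\,[u',u']_{t_1}^{t_2}+\frac{k}{2}\,[u,u]_{t_1}^{t_2}-[f,u]_{t_1}^{t_2}-f^1\,u(t_2)+f^2\,u(t_1).$$ Suppose $u\in C^2[t_1,t_2]$ is a stationary point of $I^\tau$, i.e. $\frac{d}{d\varepsilon}I^\tau[u+\varepsilon\eta]\big|_{\varepsilon=0}=0$ for every $\eta\in C^2[t_1,t_2]$. Then $$m u''(s)+k u(s)=f(s),\quad s\in(t_1,t_2),\qquad u'(t_1)=f^1/m,\quad u'(t_2)=f^2/m .$$
   Context: For an interval $[t_1,t_2]$ with $t_1\ge0$ and functions $g,h\in L^2(t_1,t_2)$, the convolution over $[t_1,t_2]$ is defined as $$[g,h]_{t_1}^{t_2}=\int_0^{t_2-t_1}g(t_1+s)\,h(t_2-s)\,ds=\int_{t_1}^{t_2}g(s)\,h(t_1+t_2-s)\,ds .$$ (In the paper the last two terms of $I^\tau$ are written as $-[\tilde f^1-\tilde f^2,u]_{t_1}^{t_2}$ with $\tilde f^1=f^1\delta(s-t_1)$, $\tilde f^2=f^2\delta(s-t_2)$, which by convention evaluate to $-f^1u(t_2)+f^2u(t_1)$.) *)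

theory Defs
  imports "HOL-Analysis.Analysis"
begin

definition conv :: "real \<Rightarrow> real \<Rightarrow> (real \<Rightarrow> real) \<Rightarrow> (real \<Rightarrow> real) \<Rightarrow> real" where
  "conv t1 t2 g h = integral {t1..t2} (\<lambda>s. g s * h (t1 + t2 - s))"

definition dI :: "real \<Rightarrow> real \<Rightarrow> (real \<Rightarrow> real) \<Rightarrow> real \<Rightarrow> real" where
  "dI t1 t2 u s = vector_derivative u (at s within {t1..t2})"

definition C2 :: "real \<Rightarrow> real \<Rightarrow> (real \<Rightarrow> real) \<Rightarrow> bool" where
  "C2 t1 t2 u \<longleftrightarrow>
     (\<forall>s\<in>{t1..t2}. u differentiable (at s within {t1..t2})) \<and>
     (\<forall>s\<in>{t1..t2}. dI t1 t2 u differentiable (at s within {t1..t2})) \<and>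
     continuous_on {t1..t2} (dI t1 t2 (dI t1 t2 u))"

definition Itau :: "real \<Rightarrow> real \<Rightarrow> real \<Rightarrow> real \<Rightarrow> (real \<Rightarrow> real) \<Rightarrow> real \<Rightarrow> real
                     \<Rightarrow> (real \<Rightarrow> real) \<Rightarrow> real" where
  "Itau t1 t2 m k f f1 f2 u =
     m / 2 * conv t1 t2 (dI t1 t2 u) (dI t1 t2 u) + k / 2 * conv t1 t2 u u
     - conv t1 t2 f u - f1 * u t2 + f2 * u t1"

end

theory Submission
  imports Defs
begin

lemma refl_int:
  fixes \<phi> :: "real \<Rightarrow> real"
  shows "integral {a..b} (\<lambda>s. \<phi> (a+b-s)) = integral {a..b} \<phi>"
proof -
  have "integral {-(-a)..-(-b)} (\<lambda>x. \<phi> (a+b+(-x))) = integral {-b..-a} (\<lambda>x. \<phi> (a+b+x))"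
    using Henstock_Kurzweil_Integration.integral_reflect_real[where f="\<lambda>x. \<phi> (a+b+x)" and a="-b" and b="-a"] by simp
  also have "\<dots> = integral {-b..-a} (\<phi> \<circ> (+) (a+b))" by (simp add: o_def)
  also have "\<dots> = integral {-b+(a+b)..-a+(a+b)} \<phi>" by (rule integral_shift_Icc_real)
  finally show ?thesis by simp
qed

lemma conv_sym: "conv t1 t2 g h = conv t1 t2 h g"
  unfolding conv_def
  using refl_int[where \<phi>="\<lambda>s. g s * h (t1 + t2 - s)" and a=t1 and b=t2] by (simp add: mult.commute)

lemma refl_image: "(\<lambda>s. t1 + t2 - s) ` {t1..t2} = {t1..(t2::real)}"
proof
  show "(\<lambda>s. t1 + t2 - s) ` {t1..t2} \<subseteq> {t1..t2}" by auto
  show "{t1..t2} \<subseteq> (\<lambda>s. t1 + t2 - s) ` {t1..t2}"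
  proof
    fix x assume "x \<in> {t1..t2}"
    then show "x \<in> (\<lambda>s. t1 + t2 - s) ` {t1..t2}"
      by (intro image_eqI[of _ _ "t1+t2-x"]) auto
  qed
qed

lemma cont_refl:
  fixes h :: "real \<Rightarrow> real"
  assumes "continuous_on {t1..t2} h"
  shows "continuous_on {t1..t2} (\<lambda>s. h (t1 + t2 - s))"
proof -
  have "continuous_on {t1..t2} (\<lambda>s. t1 + t2 - s)" by (intro continuous_on_diff continuous_on_const continuous_on_id)
  then show ?thesis by (rule continuous_on_compose2[OF assms]) auto
qed

lemma conv_integrable:
  fixes g h :: "real \<Rightarrow> real"
  assumes "continuous_on {t1..t2} g" "continuous_on {t1..t2} h"
  shows "(\<lambda>s. g s * h (t1 + t2 - s)) integrable_on {t1..t2}"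
  by (intro integrable_continuous_real continuous_on_mult'[OF assms(1) cont_refl[OF assms(2)]])

lemma C2D:
  assumes "C2 t1 t2 v" "s \<in> {t1..t2}"
  shows "(v has_vector_derivative dI t1 t2 v s) (at s within {t1..t2})"
    "(dI t1 t2 v has_vector_derivative dI t1 t2 (dI t1 t2 v) s) (at s within {t1..t2})"
  using assms unfolding C2_def dI_def by (auto simp: vector_derivative_works[symmetric])

lemma C2C:
  assumes "C2 t1 t2 v"
  shows "continuous_on {t1..t2} v" "continuous_on {t1..t2} (dI t1 t2 v)"
     "continuous_on {t1..t2} (dI t1 t2 (dI t1 t2 v))"
  using assms unfolding C2_def
  by (auto simp: continuous_on_eq_continuous_within intro: differentiable_imp_continuous_within)

lemma C2D_at:
  assumes "C2 t1 t2 v" "s \<in> {t1<..<t2}"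
  shows "(v has_vector_derivative dI t1 t2 v s) (at s)"
    "(dI t1 t2 v has_vector_derivative dI t1 t2 (dI t1 t2 v) s) (at s)"
proof -
  have s: "s \<in> {t1..t2}" using assms by auto
  show "(v has_vector_derivative dI t1 t2 v s) (at s)"
    using has_vector_derivative_within_subset[OF C2D(1)[OF assms(1) s], of "{t1<..<t2}"]
      has_vector_derivative_within_open[of s "{t1<..<t2}"] assms(2) by fastforce
  show "(dI t1 t2 v has_vector_derivative dI t1 t2 (dI t1 t2 v) s) (at s)"
    using has_vector_derivative_within_subset[OF C2D(2)[OF assms(1) s], of "{t1<..<t2}"]
      has_vector_derivative_within_open[of s "{t1<..<t2}"] assms(2) by fastforce
qed

lemma C2I:
  assumes "t1 < t2"
    and d1: "\<And>s. s \<in> {t1..t2} \<Longrightarrow> (v has_vector_derivative v1 s) (at s within {t1..t2})"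
    and d2: "\<And>s. s \<in> {t1..t2} \<Longrightarrow> (v1 has_vector_derivative v2 s) (at s within {t1..t2})"
    and c: "continuous_on {t1..t2} v2"
  shows "C2 t1 t2 v" "\<And>s. s \<in> {t1..t2} \<Longrightarrow> dI t1 t2 v s = v1 s"
    "\<And>s. s \<in> {t1..t2} \<Longrightarrow> dI t1 t2 (dI t1 t2 v) s = v2 s"
proof -
  show e1: "dI t1 t2 v s = v1 s" if "s \<in> {t1..t2}" for s
    unfolding dI_def by (rule vector_derivative_within_closed_interval[OF assms(1) that d1[OF that]])
  have d2': "(dI t1 t2 v has_vector_derivative v2 s) (at s within {t1..t2})" if "s \<in> {t1..t2}" for s
    by (rule has_vector_derivative_transform[OF that _ d2[OF that]]) (simp add: e1)
  show e2: "dI t1 t2 (dI t1 t2 v) s = v2 s" if "s \<in> {t1..t2}" for s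
    unfolding dI_def[of t1 t2 "dI t1 t2 v"] by (rule vector_derivative_within_closed_interval[OF assms(1) that d2'[OF that]])
  have "continuous_on {t1..t2} (dI t1 t2 (dI t1 t2 v))" using c by (rule continuous_on_eq) (simp add: e2)
  then show "C2 t1 t2 v" unfolding C2_def
    using d1 d2' by (auto simp: differentiable_def has_vector_derivative_def) blast+
qed

lemma within_to_at:
  fixes f :: "real \<Rightarrow> real"
  assumes "(f has_vector_derivative f') (at x within {a..b})" "x \<in> {a<..<b}"
  shows "(f has_vector_derivative f') (at x)"
  using has_vector_derivative_within_subset[OF assms(1), of "{a<..<b}"]
    has_vector_derivative_within_open[of x "{a<..<b}"] assms(2) by fastforce

lemma conv_expand:
  fixes g1 g2 h1 h2 :: "real \<Rightarrow> real"
  assumes "continuous_on {t1..t2} g1" "continuous_on {t1..t2} g2"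
    "continuous_on {t1..t2} h1" "continuous_on {t1..t2} h2"
  shows "conv t1 t2 (\<lambda>s. g1 s + e * g2 s) (\<lambda>s. h1 s + e * h2 s) =
    conv t1 t2 g1 h1 + e * (conv t1 t2 g1 h2 + conv t1 t2 g2 h1) + e^2 * conv t1 t2 g2 h2"
proof -
  have hi: "((\<lambda>s. a s * b (t1+t2-s)) has_integral conv t1 t2 a b) {t1..t2}"
    if "continuous_on {t1..t2} a" "continuous_on {t1..t2} b" for a b :: "real \<Rightarrow> real"
    unfolding conv_def using conv_integrable[OF that] by (rule integrable_integral)
  have "((\<lambda>s. g1 s * h1 (t1+t2-s) + (e * (g1 s * h2 (t1+t2-s)) + e * (g2 s * h1 (t1+t2-s)))
          + e^2 * (g2 s * h2 (t1+t2-s))) has_integral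
        (conv t1 t2 g1 h1 + (e * conv t1 t2 g1 h2 + e * conv t1 t2 g2 h1) + e^2 * conv t1 t2 g2 h2)) {t1..t2}"
    by (intro has_integral_add has_integral_mult_right hi assms)
  then have "((\<lambda>s. (g1 s + e * g2 s) * (h1 (t1+t2-s) + e * h2 (t1+t2-s))) has_integral
        (conv t1 t2 g1 h1 + (e * conv t1 t2 g1 h2 + e * conv t1 t2 g2 h1) + e^2 * conv t1 t2 g2 h2)) {t1..t2}"
    by (rule has_integral_eq[rotated]) (simp add: algebra_simps power2_eq_square)
  from integral_unique[OF this] show ?thesis
    by (simp add: conv_def[of t1 t2 "\<lambda>s. g1 s + e * g2 s"] algebra_simps)
qed

lemma conv_lin_right:
  fixes g h1 h2 :: "real \<Rightarrow> real"
  assumes "continuous_on {t1..t2} g" "continuous_on {t1..t2} h1" "continuous_on {t1..t2} h2"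
  shows "conv t1 t2 g (\<lambda>s. h1 s + e * h2 s) = conv t1 t2 g h1 + e * conv t1 t2 g h2"
proof -
  have "((\<lambda>s. g s * h1 (t1+t2-s) + e * (g s * h2 (t1+t2-s))) has_integral
        (conv t1 t2 g h1 + e * conv t1 t2 g h2)) {t1..t2}"
    unfolding conv_def
    by (intro has_integral_add has_integral_mult_right integrable_integral conv_integrable assms)
  then have "((\<lambda>s. g s * (h1 (t1+t2-s) + e * h2 (t1+t2-s))) has_integral
        (conv t1 t2 g h1 + e * conv t1 t2 g h2)) {t1..t2}"
    by (rule has_integral_eq[rotated]) (simp add: algebra_simps)
  from integral_unique[OF this] show ?thesis
    by (simp add: conv_def[of t1 t2 g "\<lambda>s. h1 s + e * h2 s"])
qed

lemma conv_lin3: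
  fixes g1 g2 g3 h :: "real \<Rightarrow> real"
  assumes "continuous_on {t1..t2} g1" "continuous_on {t1..t2} g2" "continuous_on {t1..t2} g3"
    "continuous_on {t1..t2} h"
  shows "conv t1 t2 (\<lambda>s. a * g1 s + b * g2 s - g3 s) h = a * conv t1 t2 g1 h + b * conv t1 t2 g2 h - conv t1 t2 g3 h"
proof -
  have "((\<lambda>s. a * (g1 s * h (t1+t2-s)) + b * (g2 s * h (t1+t2-s)) - g3 s * h (t1+t2-s)) has_integral
        (a * conv t1 t2 g1 h + b * conv t1 t2 g2 h - conv t1 t2 g3 h)) {t1..t2}"
    unfolding conv_def
    by (intro has_integral_add has_integral_diff has_integral_mult_right integrable_integral conv_integrable assms)
  then have "((\<lambda>s. (a * g1 s + b * g2 s - g3 s) * h (t1+t2-s)) has_integral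
        (a * conv t1 t2 g1 h + b * conv t1 t2 g2 h - conv t1 t2 g3 h)) {t1..t2}"
    by (rule has_integral_eq[rotated]) (simp add: algebra_simps)
  from integral_unique[OF this] show ?thesis
    by (simp add: conv_def[of t1 t2 "\<lambda>s. a * g1 s + b * g2 s - g3 s"])
qed

lemma ibp:
  assumes "t1 < t2" "C2 t1 t2 u" "C2 t1 t2 \<eta>"
  shows "conv t1 t2 (dI t1 t2 u) (dI t1 t2 \<eta>) =
    conv t1 t2 (dI t1 t2 (dI t1 t2 u)) \<eta> - dI t1 t2 u t2 * \<eta> t1 + dI t1 t2 u t1 * \<eta> t2"
proof -
  have dw: "((\<lambda>s. \<eta> (t1+t2-s)) has_vector_derivative - dI t1 t2 \<eta> (t1+t2-x)) (at x)"
    if "x \<in> {t1<..<t2}" for x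
  proof -
    have x': "t1+t2-x \<in> {t1<..<t2}" using that by auto
    have r: "((\<lambda>s. t1+t2-s) has_vector_derivative -1) (at x)"
      by (rule has_vector_derivative_eq_rhs, (rule derivative_intros)+) simp
    have "((\<eta> \<circ> (\<lambda>s. t1+t2-s)) has_vector_derivative (-1) *\<^sub>R dI t1 t2 \<eta> (t1+t2-x)) (at x)"
      by (rule vector_diff_chain_at[OF r]) (simp add: C2D_at[OF assms(3) x'])
    then show ?thesis by (simp add: o_def)
  qed
  have cw: "continuous_on {t1..t2} (\<lambda>s. \<eta> (t1+t2-s))" by (rule cont_refl[OF C2C(1)[OF assms(3)]])
  have i1: "((\<lambda>s. dI t1 t2 u s * (- dI t1 t2 \<eta> (t1+t2-s))) has_integral
      (dI t1 t2 u t2 * \<eta> (t1+t2-t2) - dI t1 t2 u t1 * \<eta> (t1+t2-t1)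
       - (dI t1 t2 u t2 * \<eta> t1 - dI t1 t2 u t1 * \<eta> t2 + conv t1 t2 (dI t1 t2 u) (dI t1 t2 \<eta>)))) {t1..t2}"
  proof -
    have "((\<lambda>s. dI t1 t2 u s * dI t1 t2 \<eta> (t1+t2-s)) has_integral conv t1 t2 (dI t1 t2 u) (dI t1 t2 \<eta>)) {t1..t2}"
      unfolding conv_def by (intro integrable_integral conv_integrable C2C assms)
    from has_integral_neg[OF this] show ?thesis by simp
  qed
  have "((\<lambda>s. dI t1 t2 (dI t1 t2 u) s * \<eta> (t1+t2-s)) has_integral
      (dI t1 t2 u t2 * \<eta> t1 - dI t1 t2 u t1 * \<eta> t2 + conv t1 t2 (dI t1 t2 u) (dI t1 t2 \<eta>))) {t1..t2}"
    by (rule integration_by_parts_interior[OF bounded_bilinear_mult, of t1 t2 "dI t1 t2 u"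
          "\<lambda>s. \<eta> (t1+t2-s)" "dI t1 t2 (dI t1 t2 u)" "\<lambda>s. - dI t1 t2 \<eta> (t1+t2-s)", OF _ _ cw _ dw i1])
       (use assms in \<open>auto intro: C2C C2D_at\<close>)
  from integral_unique[OF this] show ?thesis unfolding conv_def by simp
qed

theorem proposition3:
  fixes t1 t2 m k f1 f2 :: real and f u :: "real \<Rightarrow> real"
  assumes "0 \<le> t1" and "t1 < t2" and "m > 0" and "k > 0"
    and "continuous_on {t1..t2} f"
    and "C2 t1 t2 u"
    and stat: "\<And>\<eta>. C2 t1 t2 \<eta> \<Longrightarrow>
       ((\<lambda>\<epsilon>. Itau t1 t2 m k f f1 f2 (\<lambda>s. u s + \<epsilon> * \<eta> s)) has_real_derivative 0) (at 0)"
  shows "(\<forall>s\<in>{t1<..<t2}. m * dI t1 t2 (dI t1 t2 u) s + k * u s = f s)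
         \<and> dI t1 t2 u t1 = f1 / m \<and> dI t1 t2 u t2 = f2 / m"
proof -
  note cu = C2C[OF assms(6)]
  define g where "g = (\<lambda>s. m * dI t1 t2 (dI t1 t2 u) s + k * u s - f s)"
  define a where "a = m * dI t1 t2 u t1 - f1"
  define b where "b = f2 - m * dI t1 t2 u t2"
  have cg: "continuous_on {t1..t2} g" unfolding g_def by (intro continuous_intros cu assms(5))
  have key: "conv t1 t2 g \<eta> + a * \<eta> t2 + b * \<eta> t1 = 0" if eta: "C2 t1 t2 \<eta>" for \<eta>
  proof -
    note ce = C2C[OF eta]
    have dsum: "dI t1 t2 (\<lambda>s. u s + e * \<eta> s) s = dI t1 t2 u s + e * dI t1 t2 \<eta> s"
      if "s \<in> {t1..t2}" for e s
      unfolding dI_def[of t1 t2 "\<lambda>s. u s + e * \<eta> s"]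
      by (rule vector_derivative_within_closed_interval[OF assms(2) that])
        (intro has_vector_derivative_add has_vector_derivative_mult_right C2D(1)[OF assms(6) that] C2D(1)[OF eta that])
    have cdsum: "conv t1 t2 (dI t1 t2 (\<lambda>s. u s + e * \<eta> s)) (dI t1 t2 (\<lambda>s. u s + e * \<eta> s))
      = conv t1 t2 (\<lambda>s. dI t1 t2 u s + e * dI t1 t2 \<eta> s) (\<lambda>s. dI t1 t2 u s + e * dI t1 t2 \<eta> s)" for e
      unfolding conv_def by (rule Henstock_Kurzweil_Integration.integral_cong) (auto simp: dsum)
    define B0 where "B0 = m/2 * (conv t1 t2 (dI t1 t2 u) (dI t1 t2 \<eta>) + conv t1 t2 (dI t1 t2 \<eta>) (dI t1 t2 u))
       + k/2 * (conv t1 t2 u \<eta> + conv t1 t2 \<eta> u) - conv t1 t2 f \<eta> - f1 * \<eta> t2 + f2 * \<eta> t1"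
    define C0 where "C0 = m/2 * conv t1 t2 (dI t1 t2 \<eta>) (dI t1 t2 \<eta>) + k/2 * conv t1 t2 \<eta> \<eta>"
    define Q0 where "Q0 = Itau t1 t2 m k f f1 f2 u"
    have expand: "Itau t1 t2 m k f f1 f2 (\<lambda>s. u s + e * \<eta> s) = Q0 + e * B0 + e^2 * C0" for e
      unfolding Itau_def[of t1 t2 m k f f1 f2 "\<lambda>s. u s + e * \<eta> s"] Q0_def Itau_def B0_def C0_def
      by (simp add: cdsum conv_expand[OF cu(2) ce(2) cu(2) ce(2)] conv_expand[OF cu(1) ce(1) cu(1) ce(1)]
            conv_lin_right[OF assms(5) cu(1) ce(1)] algebra_simps)
    have "((\<lambda>e. Q0 + e * B0 + e^2 * C0) has_real_derivative B0) (at 0)"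
      by (auto intro!: derivative_eq_intros)
    moreover have "((\<lambda>e. Q0 + e * B0 + e^2 * C0) has_real_derivative 0) (at 0)"
      using stat[OF eta] by (simp add: expand)
    ultimately have "B0 = 0" by (rule DERIV_unique)
    then have "m * conv t1 t2 (dI t1 t2 u) (dI t1 t2 \<eta>) + k * conv t1 t2 u \<eta> - conv t1 t2 f \<eta>
        - f1 * \<eta> t2 + f2 * \<eta> t1 = 0"
      unfolding B0_def by (simp add: conv_sym[of t1 t2 "dI t1 t2 \<eta>"] conv_sym[of t1 t2 \<eta>] algebra_simps)
    moreover have "conv t1 t2 g \<eta> = m * conv t1 t2 (dI t1 t2 (dI t1 t2 u)) \<eta> + k * conv t1 t2 u \<eta> - conv t1 t2 f \<eta>"
      unfolding g_def by (rule conv_lin3[OF cu(3) cu(1) assms(5) ce(1)])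
    ultimately show ?thesis
      using ibp[OF assms(2) assms(6) eta] unfolding a_def b_def by (simp add: algebra_simps)
  qed
  have g0: "g s = 0" if s: "s \<in> {t1..t2}" for s
  proof -
    define c where "c = integral {t1..t2} (\<lambda>r. integral {t1..r} g) / (t2 - t1)"
    define G where "G = (\<lambda>r. integral {t1..r} g - c)"
    define W where "W = (\<lambda>r. integral {t1..r} G)"
    have dG: "(G has_vector_derivative g x) (at x within {t1..t2})" if "x \<in> {t1..t2}" for x
      unfolding G_def
      by (rule has_vector_derivative_eq_rhs[OF has_vector_derivative_diff[OF integral_has_vector_derivative[OF cg that] has_vector_derivative_const]]) simp
    have cG: "continuous_on {t1..t2} G" by (rule continuous_on_vector_derivative[OF dG])
    have dW: "(W has_vector_derivative G x) (at x within {t1..t2})" if "x \<in> {t1..t2}" for x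
      unfolding W_def by (rule integral_has_vector_derivative[OF cG that])
    have W1: "W t1 = 0" by (simp add: W_def)
    have cI: "continuous_on {t1..t2} (\<lambda>r. integral {t1..r} g)"
      by (rule continuous_on_vector_derivative[OF integral_has_vector_derivative[OF cg]])
    have "W t2 = integral {t1..t2} (\<lambda>r. integral {t1..r} g) - integral {t1..t2} (\<lambda>r. c)"
      unfolding W_def G_def
      by (rule integral_diff) (auto intro: integrable_continuous_real cI)
    also have "\<dots> = 0" using assms(2) by (simp add: c_def)
    finally have W2: "W t2 = 0" .
    define \<eta> where "\<eta> = (\<lambda>s. W (t1 + t2 - s))"
    have r: "((\<lambda>s. t1+t2-s) has_vector_derivative -1) (at x within {t1..t2})" for x
      by (rule has_vector_derivative_eq_rhs, (rule derivative_intros)+) simp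
    have d1: "(\<eta> has_vector_derivative - G (t1+t2-x)) (at x within {t1..t2})" if "x \<in> {t1..t2}" for x
    proof -
      have x': "t1+t2-x \<in> {t1..t2}" using that by auto
      have "((W \<circ> (\<lambda>s. t1+t2-s)) has_vector_derivative (-1) *\<^sub>R G (t1+t2-x)) (at x within {t1..t2})"
        by (rule vector_diff_chain_within[OF r]) (simp add: refl_image dW[OF x'])
      then show ?thesis by (simp add: o_def \<eta>_def)
    qed
    have d2: "((\<lambda>s. - G (t1+t2-s)) has_vector_derivative g (t1+t2-x)) (at x within {t1..t2})" if "x \<in> {t1..t2}" for x
    proof -
      have x': "t1+t2-x \<in> {t1..t2}" using that by auto
      have "((G \<circ> (\<lambda>s. t1+t2-s)) has_vector_derivative (-1) *\<^sub>R g (t1+t2-x)) (at x within {t1..t2})"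
        by (rule vector_diff_chain_within[OF r]) (simp add: refl_image dG[OF x'])
      from has_vector_derivative_minus[OF this] show ?thesis by (simp add: o_def)
    qed
    have C2e: "C2 t1 t2 \<eta>" by (rule C2I(1)[OF assms(2) d1 d2 cont_refl[OF cg]])
    have "conv t1 t2 g \<eta> = 0" using key[OF C2e] W1 W2 by (simp add: \<eta>_def)
    then have i0: "integral {t1..t2} (\<lambda>s. g s * W s) = 0" by (simp add: conv_def \<eta>_def)
    have cWc: "continuous_on {t1..t2} W" by (rule continuous_on_vector_derivative[OF dW])
    have iGG: "((\<lambda>s. G s * G s) has_integral integral {t1..t2} (\<lambda>s. G s * G s)) {t1..t2}"
      by (intro integrable_integral integrable_continuous_real continuous_intros cG)
    have dGa: "(G has_vector_derivative g x) (at x)" if "x \<in> {t1<..<t2}" for x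
      using within_to_at[OF dG that] that by auto
    have dWa: "(W has_vector_derivative G x) (at x)" if "x \<in> {t1<..<t2}" for x
      using within_to_at[OF dW that] that by auto
    have "((\<lambda>s. g s * W s) has_integral (G t2 * W t2 - G t1 * W t1 - integral {t1..t2} (\<lambda>s. G s * G s))) {t1..t2}"
    proof (rule integration_by_parts_interior[OF bounded_bilinear_mult, of t1 t2 G W g G])
      show "t1 \<le> t2" using assms(2) by simp
      show "continuous_on {t1..t2} G" by (rule cG)
      show "continuous_on {t1..t2} W" by (rule cWc)
      show "(G has_vector_derivative g x) (at x)" if "x \<in> {t1<..<t2}" for x using dGa[OF that] .
      show "(W has_vector_derivative G x) (at x)" if "x \<in> {t1<..<t2}" for x using dWa[OF that] .
      show "((\<lambda>x. G x * G x) has_integral (G t2 * W t2 - G t1 * W t1 -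
        (G t2 * W t2 - G t1 * W t1 - integral {t1..t2} (\<lambda>s. G s * G s)))) {t1..t2}"
        using iGG by simp
    qed
    then have "integral {t1..t2} (\<lambda>s. g s * W s) = - integral {t1..t2} (\<lambda>s. G s * G s)"
      using W1 W2 by (simp add: integral_unique)
    then have "integral {t1..t2} (\<lambda>s. G s * G s) = 0" using i0 by simp
    then have GG0: "((\<lambda>s. G s * G s) has_integral 0) {t1..t2}" using iGG by simp
    have Gz: "G x = 0" if "x \<in> {t1..t2}" for x
    proof -
      have "G x * G x = 0"
        by (rule has_integral_0_cbox_imp_0[of t1 t2 "\<lambda>s. G s * G s"])
          (use cG GG0 assms(2) that in \<open>auto intro!: continuous_intros\<close>)
      then show ?thesis by simp
    qed
    have "(G has_vector_derivative 0) (at s within {t1..t2})"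
      by (rule has_vector_derivative_transform[OF s _ has_vector_derivative_const]) (simp add: Gz)
    then show ?thesis
      using vector_derivative_unique_within_closed_interval[of t1 t2 s G "g s" 0] dG[OF s] assms(2) s by simp
  qed
  have gconv: "conv t1 t2 g \<eta> = 0" for \<eta>
  proof -
    have "conv t1 t2 g \<eta> = integral {t1..t2} (\<lambda>s. 0::real)"
      unfolding conv_def by (rule Henstock_Kurzweil_Integration.integral_cong) (simp add: g0)
    then show ?thesis by simp
  qed
  have C2a: "C2 t1 t2 (\<lambda>s. s - t1)"
    by (rule C2I(1)[OF assms(2), of _ "\<lambda>_. 1" "\<lambda>_. 0"]) (auto intro!: derivative_eq_intros)
  have C2b: "C2 t1 t2 (\<lambda>s. t2 - s)"
    by (rule C2I(1)[OF assms(2), of _ "\<lambda>_. -1" "\<lambda>_. 0"]) (auto intro!: derivative_eq_intros)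
  have "a * (t2 - t1) = 0" using key[OF C2a] by (simp add: gconv)
  then have a0: "a = 0" using assms(2) by simp
  have "b * (t2 - t1) = 0" using key[OF C2b] by (simp add: gconv)
  then have b0: "b = 0" using assms(2) by simp
  show ?thesis
  proof (intro conjI ballI)
    fix s assume "s \<in> {t1<..<t2}"
    then have "g s = 0" by (intro g0) auto
    then show "m * dI t1 t2 (dI t1 t2 u) s + k * u s = f s" unfolding g_def by simp
  next
    show "dI t1 t2 u t1 = f1 / m" using a0 assms(3) unfolding a_def by (simp add: field_simps)
  next
    show "dI t1 t2 u t2 = f2 / m" using b0 assms(3) unfolding b_def by (simp add: field_simps)
  qed
qed

end
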